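(* For every team $R$ of three robots, the Equivalent Oscillation problem $EqOsc$ is solvable by $R$ in the model $\mathcal{FSTA}$ under the fully synchronous scheduler with limited visibility, i.e. $EqOsc\in Task(\mathcal{FSTA}, FSYNCH, \mathcal{L.V.}; R)$.
   Context: Robots are anonymous, identical, autonomous points in the Euclidean plane. Each has its own local coordinate system, with no common chirality. Robots operate in Look-Compute-Move cycles: an instantaneous snapshot of visible robot positions, a computation of a destination, then a move. In $\mathcal{FSTA}$, each robot has a persistent light with colors from a finite set, set at the end of Compute and visible only to its owner; it serves as finite internal memory, and robots are silent. Under the fully synchronous scheduler, all robots are activated in every round. Under limited visibility, a robot sees only robots within a fixed distance $V_r$ (same for all robots) of its current position, and the initial visibility graph (robots adjacent iff they see each other) is connected. Problem Equivalent Oscillation ($EqOsc$): three robots $r_1,r_2,r_3$ are initially at collinear points $B,A,C$ respectively, with $AB=AC=d$. Let $B',C'$ be the points on this line (on segments $AB$, $AC$) with $AB'=AC'=\frac{2d}{3}$. The robots $r_1$ and $r_3$ must always be equidistant from $r_2$ (which is at $A$). They must also oscillate: if at some round $t$, $r_1,r_3$ are at $B,C$, then at some round $t'>t$ they are at $B',C'$; and if at round $t'$ they are at $B',C'$, then at some round $t''>t'$ they are at $B,C$. *)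

theory Defs
  imports Complex_Main
begin

text \<open>Each robot has a fixed local coordinate system,
given by a linear similarity (arbitrary unit length, rotation, and possibly a
reflection = no common chirality); its own current position is the origin of
its local view.\<close>

datatype rob = R1 | R2 | R3

text \<open>A frame (a, refl) with a \<noteq> 0: global displacement z is seen locally as
a * z (or a * conjugate z if refl).\<close>
type_synonym frame = "complex \<times> bool"

definition valid_frame :: "frame \<Rightarrow> bool" where
  "valid_frame F \<longleftrightarrow> fst F \<noteq> 0"

definition to_local :: "frame \<Rightarrow> complex \<Rightarrow> complex" where
  "to_local F z = fst F * (if snd F then cnj z else z)"

definition to_global :: "frame \<Rightarrow> complex \<Rightarrow> complex" where
  "to_global F w = (if snd F then cnj (w / fst F) else w / fst F)"

text \<open>An FSTA algorithm: from the robot's own light colour and the snapshot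
(local positions of the visible robots, itself included at the origin) it
computes a new colour and a destination in local coordinates.\<close>
type_synonym algo = "nat \<Rightarrow> complex set \<Rightarrow> nat \<times> complex"

definition snapshot :: "real \<Rightarrow> frame \<Rightarrow> (rob \<Rightarrow> complex) \<Rightarrow> rob \<Rightarrow> complex set" where
  "snapshot V F p i = {to_local F (p j - p i) | j. cmod (p j - p i) \<le> V}"

text \<open>Fully synchronous execution with rigid moves: all robots are activated
in every round.\<close>
fun exec :: "algo \<Rightarrow> (rob \<Rightarrow> frame) \<Rightarrow> real \<Rightarrow> (rob \<Rightarrow> complex) \<Rightarrow> nat \<Rightarrow> nat
             \<Rightarrow> (rob \<Rightarrow> complex) \<times> (rob \<Rightarrow> nat)" where
  "exec A F V p0 c0 0 = (p0, (\<lambda>_. c0))"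
| "exec A F V p0 c0 (Suc t) =
     (let (p, c) = exec A F V p0 c0 t in
       ((\<lambda>i. p i + to_global (F i) (snd (A (c i) (snapshot V (F i) p i)))),
        (\<lambda>i. fst (A (c i) (snapshot V (F i) p i)))))"

definition pos :: "algo \<Rightarrow> (rob \<Rightarrow> frame) \<Rightarrow> real \<Rightarrow> (rob \<Rightarrow> complex) \<Rightarrow> nat \<Rightarrow> nat \<Rightarrow> rob \<Rightarrow> complex" where
  "pos A F V p0 c0 t = fst (exec A F V p0 c0 t)"

definition vis_connected :: "real \<Rightarrow> (rob \<Rightarrow> complex) \<Rightarrow> bool" where
  "vis_connected V p \<longleftrightarrow> (\<forall>i j. (\<lambda>x y. cmod (p x - p y) \<le> V)\<^sup>*\<^sup>* i j)"

text \<open>EqOsc specification for a trajectory q, with A = centre and u = vector from A to C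
(so B = A - u, C = A + u, d = |u|, B' = A - 2u/3, C' = A + 2u/3).\<close>
definition eqosc_ok :: "(nat \<Rightarrow> rob \<Rightarrow> complex) \<Rightarrow> complex \<Rightarrow> complex \<Rightarrow> bool" where
  "eqosc_ok q a u \<longleftrightarrow>
     (\<forall>t. q t R2 = a) \<and>
     (\<forall>t. cmod (q t R1 - q t R2) = cmod (q t R3 - q t R2)) \<and>
     (\<forall>t. q t R1 = a - u \<and> q t R3 = a + u \<longrightarrow>
          (\<exists>t'>t. q t' R1 = a - (2/3) * u \<and> q t' R3 = a + (2/3) * u)) \<and>
     (\<forall>t. q t R1 = a - (2/3) * u \<and> q t R3 = a + (2/3) * u \<longrightarrow>
          (\<exists>t'>t. q t' R1 = a - u \<and> q t' R3 = a + u))"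

end

theory Submission
  imports Defs
begin

definition mid :: "complex set \<Rightarrow> bool" where
  "mid S \<longleftrightarrow> (\<exists>x\<in>S. x \<noteq> 0 \<and> -x \<in> S)"

definition nearest :: "complex set \<Rightarrow> complex" where
  "nearest S = (SOME x. x \<in> S \<and> x \<noteq> 0 \<and> (\<forall>y\<in>S. y \<noteq> 0 \<longrightarrow> cmod x \<le> cmod y))"

definition Alg0 :: algo where
  "Alg0 c S = (if mid S then (c, 0) else if c = 0 then (1, nearest S / 3) else (0, - (nearest S / 2)))"

lemma end_snap:
  assumes "w \<noteq> 0" "w \<in> S" "S \<subseteq> {0, w, 2*w}"
  shows "\<not> mid S \<and> nearest S = w"
proof
  show "\<not> mid S"
  proof
    assume "mid S"
    then obtain x where x: "x \<in> S" "x \<noteq> 0" "-x \<in> S" unfolding mid_def by blast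
    then have "x = w \<or> x = 2*w" "-x = 0 \<or> -x = w \<or> -x = 2*w" using assms by auto
    moreover have "-w \<noteq> w" "-w \<noteq> 2*w" "-(2*w) \<noteq> w" "-(2*w) \<noteq> 2*w"
      using assms(1) by (auto simp: complex_eq_iff)
    ultimately show False using x(2) by auto
  qed
  have P: "w \<in> S \<and> w \<noteq> 0 \<and> (\<forall>y\<in>S. y \<noteq> 0 \<longrightarrow> cmod w \<le> cmod y)"
    using assms by (auto simp: norm_mult)
  show "nearest S = w" unfolding nearest_def
  proof (rule some_equality)
    fix x assume "x \<in> S \<and> x \<noteq> 0 \<and> (\<forall>y\<in>S. y \<noteq> 0 \<longrightarrow> cmod x \<le> cmod y)"
    then have "x \<in> S" "x \<noteq> 0" "cmod x \<le> cmod w" using assms by auto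
    with assms show "x = w" by (auto simp: norm_mult)
  qed (rule P)
qed

lemma loc_lin:
  "to_local F (-z) = - to_local F z" "to_local F (2*z) = 2 * to_local F z"
  by (auto simp: to_local_def)

lemma loc_nz: "valid_frame F \<Longrightarrow> z \<noteq> 0 \<Longrightarrow> to_local F z \<noteq> 0"
  by (auto simp: to_local_def valid_frame_def)

lemma glob3: "valid_frame F \<Longrightarrow> to_global F (to_local F z / 3) = z / 3"
  by (auto simp: to_local_def to_global_def valid_frame_def)

lemma glob2: "valid_frame F \<Longrightarrow> to_global F (- (to_local F z / 2)) = - (z / 2)"
  by (auto simp: to_local_def to_global_def valid_frame_def)

lemma glob0: "to_global F 0 = 0"
  by (auto simp: to_global_def)

definition pts :: "complex \<Rightarrow> complex \<Rightarrow> rob \<Rightarrow> complex" where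
  "pts a v i = (case i of R1 \<Rightarrow> a - v | R2 \<Rightarrow> a | R3 \<Rightarrow> a + v)"

lemma snaps:
  assumes "v \<noteq> 0" "cmod v \<le> V" "valid_frame F"
  shows "mid (snapshot V F (pts a v) R2)"
    "\<not> mid (snapshot V F (pts a v) R1) \<and> nearest (snapshot V F (pts a v) R1) = to_local F v"
    "\<not> mid (snapshot V F (pts a v) R3) \<and> nearest (snapshot V F (pts a v) R3) = to_local F (-v)"
proof -
  have nv: "cmod (-v) \<le> V" using assms by simp
  show "mid (snapshot V F (pts a v) R2)"
  proof -
    have m1: "to_local F v \<in> snapshot V F (pts a v) R2"
      unfolding snapshot_def using assms by (auto simp: pts_def intro!: exI[where x=R3])
    have m2: "- to_local F v \<in> snapshot V F (pts a v) R2"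
      unfolding snapshot_def using assms nv by (auto simp: pts_def loc_lin[symmetric] intro!: exI[where x=R1])
    show ?thesis unfolding mid_def using m1 m2 loc_nz[OF assms(3) assms(1)] by blast
  qed
  show "\<not> mid (snapshot V F (pts a v) R1) \<and> nearest (snapshot V F (pts a v) R1) = to_local F v"
  proof (rule end_snap)
    show "to_local F v \<noteq> 0" using loc_nz assms by blast
    show "to_local F v \<in> snapshot V F (pts a v) R1"
      unfolding snapshot_def using assms by (auto simp: pts_def intro!: exI[where x=R2])
    show "snapshot V F (pts a v) R1 \<subseteq> {0, to_local F v, 2 * to_local F v}"
      unfolding snapshot_def
      apply clarify
      subgoal for x j by (cases j) (auto simp: pts_def to_local_def split: if_splits)
      done
  qed
  show "\<not> mid (snapshot V F (pts a v) R3) \<and> nearest (snapshot V F (pts a v) R3) = to_local F (-v)"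
  proof (rule end_snap)
    show "to_local F (-v) \<noteq> 0" using loc_nz assms by simp
    show "to_local F (-v) \<in> snapshot V F (pts a v) R3"
      unfolding snapshot_def using assms by (auto simp: pts_def intro!: exI[where x=R2])
    show "snapshot V F (pts a v) R3 \<subseteq> {0, to_local F (-v), 2 * to_local F (-v)}"
      unfolding snapshot_def
      apply clarify
      subgoal for x j by (cases j) (auto simp: pts_def to_local_def split: if_splits)
      done
  qed
qed

definition st :: "complex \<Rightarrow> complex \<Rightarrow> nat \<Rightarrow> (rob \<Rightarrow> complex) \<times> (rob \<Rightarrow> nat)" where
  "st a u t = (if even t then (pts a u, \<lambda>_. 0) else (pts a ((2/3) * u), \<lambda>i. if i = R2 then 0 else 1))"

lemma exec_st:
  assumes "u \<noteq> 0" "cmod u \<le> V" "\<forall>i. valid_frame (F i)"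
  shows "exec Alg0 F V (pts a u) 0 t = st a u t"
proof (induction t)
  case 0 then show ?case by (simp add: st_def)
next
  case (Suc t)
  have nn: "cmod ((2/3) * u) = 2/3 * cmod u" by (simp add: norm_mult)
  have v2: "(2/3) * u \<noteq> 0" "cmod ((2/3) * u) \<le> V" using assms norm_ge_zero[of u] nn by (simp, linarith)
  show ?case
  proof (cases "even t")
    case True
    note s = snaps[OF assms(1,2), of "F _" a]
    show ?thesis using True assms
      apply (simp add: Suc st_def)
      apply (intro conjI ext)
      subgoal for i using s[of R1] s[of R2] s[of R3]
        by (cases i) (auto simp: Alg0_def glob3 glob0 pts_def field_simps)
      subgoal for i using s[of R1] s[of R2] s[of R3]
        by (cases i) (auto simp: Alg0_def pts_def)
      done
  next
    case False
    note s = snaps[OF v2, of "F _" a]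
    show ?thesis using False assms
      apply (simp add: Suc st_def)
      apply (intro conjI ext)
      subgoal for i using s[of R1] s[of R2] s[of R3]
        by (cases i) (auto simp: Alg0_def glob2 glob0 pts_def field_simps)
      subgoal for i using s[of R1] s[of R2] s[of R3]
        by (cases i) (auto simp: Alg0_def pts_def)
      done
  qed
qed

lemma conn_bound:
  assumes "vis_connected V (pts a u)" "V > 0"
  shows "cmod u \<le> V"
proof (rule ccontr)
  assume h: "\<not> cmod u \<le> V"
  let ?r = "\<lambda>x y. cmod (pts a u x - pts a u y) \<le> V"
  have step: "?r R1 y \<Longrightarrow> y = R1" for y
    using h assms(2) by (cases y) (auto simp: pts_def norm_mult norm_minus_commute)
  have "?r\<^sup>*\<^sup>* R1 R2" using assms(1) unfolding vis_connected_def by blast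
  moreover have "?r\<^sup>*\<^sup>* x y \<Longrightarrow> x = R1 \<Longrightarrow> y = R1" for x y
    by (induction rule: rtranclp_induct) (auto dest: step)
  ultimately show False by auto
qed

theorem lemma4:
  shows "\<exists>(Alg :: algo) (Col :: nat set) c0.
           finite Col \<and> c0 \<in> Col \<and> (\<forall>c\<in>Col. \<forall>S. fst (Alg c S) \<in> Col) \<and>
           (\<forall>(V::real) (a::complex) (u::complex) (F :: rob \<Rightarrow> frame) (p0 :: rob \<Rightarrow> complex).
              V > 0 \<longrightarrow> u \<noteq> 0 \<longrightarrow> (\<forall>i. valid_frame (F i)) \<longrightarrow>
              p0 R1 = a - u \<longrightarrow> p0 R2 = a \<longrightarrow> p0 R3 = a + u \<longrightarrow>
              vis_connected V p0 \<longrightarrow>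
              eqosc_ok (pos Alg F V p0 c0) a u)"
proof (intro exI conjI allI impI)
  show "finite {0::nat, 1}" by simp
  show "(0::nat) \<in> {0, 1}" by simp
  show "\<forall>c\<in>{0::nat,1}. \<forall>S. fst (Alg0 c S) \<in> {0, 1}" by (auto simp: Alg0_def)
  fix V :: real and a u :: complex and F :: "rob \<Rightarrow> frame" and p0
  assume V: "V > 0" and u: "u \<noteq> 0" and F: "\<forall>i. valid_frame (F i)"
    and p1: "p0 R1 = a - u" and p2: "p0 R2 = a" and p3: "p0 R3 = a + u"
    and c: "vis_connected V p0"
  have p0: "p0 = pts a u" using p1 p2 p3 by (auto simp: pts_def split: rob.splits)
  have b: "cmod u \<le> V" using conn_bound c V p0 by blast
  have P: "pos Alg0 F V p0 0 t = (if even t then pts a u else pts a ((2/3) * u))" for t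
    unfolding pos_def p0 exec_st[OF u b F] by (simp add: st_def)
  have ne1: "a - u \<noteq> a - (2/3) * u" using u by (auto simp: complex_eq_iff)
  show "eqosc_ok (pos Alg0 F V p0 0) a u"
    unfolding eqosc_ok_def P
  proof (intro conjI allI impI)
    fix t :: nat
    show "(if even t then pts a u else pts a (2 / 3 * u)) R2 = a" by (simp add: pts_def)
    show "cmod ((if even t then pts a u else pts a (2 / 3 * u)) R1 - (if even t then pts a u else pts a (2 / 3 * u)) R2) =
          cmod ((if even t then pts a u else pts a (2 / 3 * u)) R3 - (if even t then pts a u else pts a (2 / 3 * u)) R2)"
      by (simp add: pts_def)
  next
    fix t :: nat
    assume "(if even t then pts a u else pts a (2 / 3 * u)) R1 = a - u \<and>
            (if even t then pts a u else pts a (2 / 3 * u)) R3 = a + u"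
    then have "even t" using ne1 by (auto simp: pts_def split: if_splits)
    then show "\<exists>t'>t. (if even t' then pts a u else pts a (2 / 3 * u)) R1 = a - 2 / 3 * u \<and>
                (if even t' then pts a u else pts a (2 / 3 * u)) R3 = a + 2 / 3 * u"
      by (intro exI[where x="Suc t"]) (simp add: pts_def)
  next
    fix t :: nat
    assume "(if even t then pts a u else pts a (2 / 3 * u)) R1 = a - 2/3 * u \<and>
            (if even t then pts a u else pts a (2 / 3 * u)) R3 = a + 2/3 * u"
    then have "odd t" using ne1 by (auto simp: pts_def split: if_splits)
    then show "\<exists>t'>t. (if even t' then pts a u else pts a (2 / 3 * u)) R1 = a - u \<and>
                (if even t' then pts a u else pts a (2 / 3 * u)) R3 = a + u"
      by (intro exI[where x="Suc t"]) (simp add: pts_def)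
  qed
qed

end
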